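(* Assume $5\gamma<\tau$, where $\tau=|S_c(P,B)|$, and let $c_e$ be the cost of the user at location $\tau-5\gamma$ of $S_c(P,B)$. Then for every mediator $m\in M$, $c_m\ge c_e$.
   Context: Model: finite sets of users $P$ (costs $c(p)\ge0$), mediators $M$ (the sets $P(m)$ partition $P$), advertisers $A$ (capacity $u(a)$ a positive integer, value $v(a)\ge0$); each advertiser $a$ has $u(a)$ slots of value $v(a)$; $B$ is the set of all slots. $\gamma\ge1$ is an integer-valued or real bound with $u(a)\le\gamma$ and $|P(m)|\le\gamma$ for all $a,m$ (locations such as $\tau-5\gamma$ are assumed to be positive integers). Costs/values are compared using a fixed tie-breaking rule making them all distinct. Canonical assignment $S_c(P',B')$: order slots of $B'$ by decreasing value $b_1,b_2,\dots$ and users of $P'$ by increasing cost $p_1,p_2,\dots$; include $(p_i,b_i)$ for $i\le\min\{|P'|,|B'|\}$ iff $v(b_i)>c(p_i)$; the user at location $i$ is $p_i$. Thresholds of the Price by Removal Mechanism: for each mediator $m$, if $|S_c(P\setminus P(m),B)|>4\gamma$, $c_m$ is the cost of the user at location $|S_c(P\setminus P(m),B)|-4\gamma$ of $S_c(P\setminus P(m),B)$; otherwise $c_m=-\infty$. *)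

theory Defs
  imports "HOL-Library.Extended_Real"
begin

text \<open>Slots: advertiser a has slots (a,0),...,(a,u a - 1), each of value v a.\<close>
definition slots :: "'a set \<Rightarrow> ('a \<Rightarrow> nat) \<Rightarrow> ('a \<times> nat) set" where
  "slots A u = {(a, j). a \<in> A \<and> j < u a}"

text \<open>A fixed enumeration of a finite set; used as the fixed tie-breaking rule.\<close>
definition enum_set :: "'x set \<Rightarrow> 'x list" where
  "enum_set S = (SOME xs. distinct xs \<and> set xs = S)"

definition users_order :: "('p \<Rightarrow> real) \<Rightarrow> 'p set \<Rightarrow> 'p list" where
  "users_order c P' = sort_key c (enum_set P')"

definition slots_order :: "('a \<Rightarrow> real) \<Rightarrow> ('a \<times> nat) set \<Rightarrow> ('a \<times> nat) list" where
  "slots_order v B' = sort_key (\<lambda>b. - v (fst b)) (enum_set B')"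

definition canonical ::
  "('p \<Rightarrow> real) \<Rightarrow> ('a \<Rightarrow> real) \<Rightarrow> 'p set \<Rightarrow> ('a \<times> nat) set \<Rightarrow> ('p \<times> ('a \<times> nat)) list" where
  "canonical c v P' B' =
     filter (\<lambda>(p, b). c p < v (fst b)) (zip (users_order c P') (slots_order v B'))"

text \<open>The user at (1-based) location i, i.e. p_i.\<close>
definition user_at :: "('p \<Rightarrow> real) \<Rightarrow> 'p set \<Rightarrow> nat \<Rightarrow> 'p" where
  "user_at c P' i = users_order c P' ! (i - 1)"

definition threshold ::
  "('p \<Rightarrow> real) \<Rightarrow> ('a \<Rightarrow> real) \<Rightarrow> 'p set \<Rightarrow> ('a \<times> nat) set \<Rightarrow> nat \<Rightarrow> 'p set \<Rightarrow> ereal" where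
  "threshold c v P B \<gamma> Pm =
     (let k = length (canonical c v (P - Pm) B) in
      if k > 4 * \<gamma> then ereal (c (user_at c (P - Pm) (k - 4 * \<gamma>))) else - \<infinity>)"

end

theory Submission
  imports Defs
begin

lemma enum_set_props: "finite S \<Longrightarrow> distinct (enum_set S) \<and> set (enum_set S) = S"
  unfolding enum_set_def by (rule someI_ex) (metis finite_distinct_list)

lemma users_order_props:
  assumes "finite X" "inj_on c X"
  shows "sorted_wrt (\<lambda>x y. c x < c y) (users_order c X)" "set (users_order c X) = X"
    "distinct (users_order c X)" "length (users_order c X) = card X"
proof -
  have e: "distinct (enum_set X)" "set (enum_set X) = X" using enum_set_props[OF assms(1)] by auto
  show s: "set (users_order c X) = X" unfolding users_order_def using e by simp
  show d: "distinct (users_order c X)" unfolding users_order_def using e by simp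
  show "length (users_order c X) = card X" using s d distinct_card by fastforce
  have "sorted (map c (users_order c X))" unfolding users_order_def by (simp add: sorted_sort_key)
  moreover have "distinct (map c (users_order c X))" using d s assms(2) by (simp add: distinct_map)
  ultimately have "sorted_wrt (<) (map c (users_order c X))" using strict_sorted_iff by blast
  then show "sorted_wrt (\<lambda>x y. c x < c y) (users_order c X)" by (simp add: sorted_wrt_map)
qed

lemma slots_sorted:
  "j \<le> k \<Longrightarrow> k < length (slots_order v B) \<Longrightarrow> v (fst (slots_order v B ! k)) \<le> v (fst (slots_order v B ! j))"
proof -
  assume a: "j \<le> k" "k < length (slots_order v B)"
  have "sorted (map (\<lambda>b. - v (fst b)) (slots_order v B))" unfolding slots_order_def by (simp add: sorted_sort_key)
  then have "- v (fst (slots_order v B ! j)) \<le> - v (fst (slots_order v B ! k))"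
    using a by (auto simp: sorted_iff_nth_mono)
  then show ?thesis by simp
qed

lemma rank_take:
  assumes "sorted_wrt (\<lambda>x y. f x < (f y::real)) xs" "i < length xs"
  shows "{y \<in> set xs. f y < f (xs!i)} = set (take i xs)"
proof
  show "{y \<in> set xs. f y < f (xs!i)} \<subseteq> set (take i xs)"
  proof
    fix y assume "y \<in> {y \<in> set xs. f y < f (xs!i)}"
    then obtain j where j: "j < length xs" "y = xs ! j" "f y < f (xs!i)" by (auto simp: in_set_conv_nth)
    have "j < i"
    proof (rule ccontr)
      assume "\<not> j < i"
      then have "j = i \<or> i < j" by auto
      then show False using j assms by (auto dest: sorted_wrt_nth_less)
    qed
    then show "y \<in> set (take i xs)" using j by (auto simp: in_set_conv_nth)
  qed
next
  show "set (take i xs) \<subseteq> {y \<in> set xs. f y < f (xs!i)}"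
  proof
    fix y assume "y \<in> set (take i xs)"
    then obtain j where j: "j < i" "y = xs ! j" using assms(2) by (auto simp: in_set_conv_nth)
    then show "y \<in> {y \<in> set xs. f y < f (xs!i)}" using assms sorted_wrt_nth_less[OF assms(1) j(1)]
      by auto
  qed
qed

lemma strict_distinct: "sorted_wrt (\<lambda>x y. f x < (f y::real)) xs \<Longrightarrow> distinct xs"
  by (induction xs) auto

lemma sorted_le: "sorted_wrt (\<lambda>x y. f x < (f y::real)) xs \<Longrightarrow> j \<le> k \<Longrightarrow> k < length xs \<Longrightarrow> f (xs!j) \<le> f (xs!k)"
proof (cases "j = k")
  case False
  assume a: "sorted_wrt (\<lambda>x y. f x < (f y::real)) xs" "j \<le> k" "k < length xs"
  then have "j < k" using False by simp
  from sorted_wrt_nth_less[OF a(1) this a(3)] show ?thesis by simp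
qed simp

lemma rank_lower:
  assumes sx: "sorted_wrt (\<lambda>x y. f x < (f y::real)) xs" and sy: "sorted_wrt (\<lambda>x y. f x < f y) ys"
    and sub: "set ys \<subseteq> set xs" and i: "i < length ys"
  shows "f (xs!i) \<le> f (ys!i)"
proof (rule ccontr)
  assume "\<not> ?thesis"
  then have lt: "f (ys!i) < f (xs!i)" by simp
  have il: "i < length xs"
  proof (rule ccontr)
    assume "\<not> i < length xs"
    then have "card (set xs) < card (set ys)"
      using i distinct_card[OF strict_distinct[OF sx]] distinct_card[OF strict_distinct[OF sy]] by simp
    moreover have "card (set ys) \<le> card (set xs)" using sub by (simp add: card_mono)
    ultimately show False by simp
  qed
  have "set (take (Suc i) ys) \<subseteq> {y \<in> set xs. f y < f (xs!i)}"
  proof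
    fix y assume "y \<in> set (take (Suc i) ys)"
    then obtain j where j0: "j < Suc i" "y = ys ! j" using i by (auto simp: in_set_conv_nth)
    then have j: "j \<le> i" "y = ys ! j" by auto
    then have "f y \<le> f (ys!i)" using sorted_le[OF sy j(1) i] by simp
    moreover have "y \<in> set xs" using j i sub by auto
    ultimately show "y \<in> {y \<in> set xs. f y < f (xs!i)}" using lt by auto
  qed
  then have "card (set (take (Suc i) ys)) \<le> card (set (take i xs))"
    using rank_take[OF sx il] by (simp add: card_mono)
  moreover have "card (set (take (Suc i) ys)) = Suc i"
    using distinct_card[OF distinct_take[OF strict_distinct[OF sy]]] i by simp
  moreover have "card (set (take i xs)) \<le> i" using card_length[of "take i xs"] by simp
  ultimately show False by simp
qed

lemma rank_upper:
  assumes sx: "sorted_wrt (\<lambda>x y. f x < (f y::real)) xs" and sy: "sorted_wrt (\<lambda>x y. f x < f y) ys"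
    and sub: "set ys \<subseteq> set xs" and i: "i < length ys" and k: "card (set xs - set ys) \<le> k"
    and ik: "i + k < length xs"
  shows "f (ys!i) \<le> f (xs!(i+k))"
proof (rule ccontr)
  assume "\<not> ?thesis"
  then have lt: "f (xs!(i+k)) < f (ys!i)" by simp
  define T where "T = set (take (Suc (i+k)) xs)"
  have "T \<inter> set ys \<subseteq> {y \<in> set ys. f y < f (ys!i)}"
  proof
    fix y assume "y \<in> T \<inter> set ys"
    then have yT: "y \<in> T" and yy: "y \<in> set ys" by auto
    from yT obtain j where j0: "j < Suc (i + k)" "y = xs ! j" using ik unfolding T_def by (auto simp: in_set_conv_nth)
    then have j: "j \<le> i + k" "y = xs ! j" "y \<in> set ys" using yy by auto
    then have "f y \<le> f (xs!(i+k))" using sorted_le[OF sx j(1) ik] by simp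
    then show "y \<in> {y \<in> set ys. f y < f (ys!i)}" using lt j by auto
  qed
  then have "T \<inter> set ys \<subseteq> set (take i ys)"
    by (rule subset_trans[OF _ equalityD1[OF rank_take[OF sy i]]])
  then have "card (T \<inter> set ys) \<le> card (set (take i ys))" by (intro card_mono) auto
  moreover have "card (set (take i ys)) \<le> i" using card_length[of "take i ys"] by simp
  ultimately have c1: "card (T \<inter> set ys) \<le> i" by linarith
  have cT: "card T = Suc (i+k)"
    unfolding T_def using distinct_card[OF distinct_take[OF strict_distinct[OF sx]]] ik by simp
  have "T - set ys \<subseteq> set xs - set ys" unfolding T_def using set_take_subset by fast
  then have "card (T - set ys) \<le> card (set xs - set ys)" by (intro card_mono) auto
  then have c2: "card (T - set ys) \<le> k" using k by linarith
  have "card T = card (T \<inter> set ys) + card (T - set ys)"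
    unfolding T_def by (rule card_Int_Diff) simp
  then show False using c1 c2 cT by linarith
qed

lemma filter_tw:
  assumes "\<And>j k. j \<le> k \<Longrightarrow> k < length zs \<Longrightarrow> Q (zs!k) \<Longrightarrow> Q (zs!j)"
  shows "filter Q zs = takeWhile Q zs"
  using assms
proof (induction zs)
  case Nil then show ?case by simp
next
  case (Cons z zs)
  show ?case
  proof (cases "Q z")
    case True
    have "filter Q zs = takeWhile Q zs"
    proof (rule Cons.IH)
      fix j k assume "j \<le> k" "k < length zs" "Q (zs!k)"
      then show "Q (zs!j)" using Cons.prems[of "Suc j" "Suc k"] by simp
    qed
    then show ?thesis using True by simp
  next
    case False
    have "\<forall>x\<in>set zs. \<not> Q x"
    proof
      fix x assume "x \<in> set zs"
      then obtain k where kk: "k < length zs" "x = zs!k" by (auto simp: in_set_conv_nth)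
      show "\<not> Q x"
      proof
        assume "Q x"
        then have q: "Q ((z#zs)!Suc k)" and l: "Suc k < length (z#zs)" using kk by simp_all
        from Cons.prems[OF _ l q, of 0] False show False by simp
      qed
    qed
    then show ?thesis using False by simp
  qed
qed

lemma tw_nth:
  assumes a: "j < length (takeWhile Q zs)" shows "Q (zs!j)"
proof -
  have "takeWhile Q zs ! j \<in> set (takeWhile Q zs)" by (rule nth_mem[OF a])
  then have "Q (takeWhile Q zs ! j)" by (rule set_takeWhileD[THEN conjunct2])
  then show ?thesis by (simp only: takeWhile_nth[OF a])
qed

lemma tw_len:
  assumes m: "m \<le> length zs" and h: "\<And>j. j < m \<Longrightarrow> Q (zs!j)"
  shows "m \<le> length (takeWhile Q zs)"
proof (rule ccontr)
  assume "\<not> ?thesis"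
  then have l: "length (takeWhile Q zs) < m" by simp
  then have "length (takeWhile Q zs) < length zs" using m by linarith
  from nth_length_takeWhile[OF this] h[OF l] show False by simp
qed

lemma canon_tw:
  assumes "finite X" "inj_on c X"
  shows "canonical c v X B = takeWhile (\<lambda>(p, b). c p < v (fst b)) (zip (users_order c X) (slots_order v B))"
  unfolding canonical_def
proof (rule filter_tw)
  fix j k
  let ?U = "users_order c X" and ?S = "slots_order v B"
  assume jk: "j \<le> k" and kl: "k < length (zip ?U ?S)"
    and q: "(\<lambda>(p, b). c p < v (fst b)) (zip ?U ?S ! k)"
  have kU: "k < length ?U" and kS: "k < length ?S" using kl by simp_all
  have q': "c (?U!k) < v (fst (?S!k))" using q kU kS by simp
  have "c (?U!j) \<le> c (?U!k)" using sorted_le[OF users_order_props(1)[OF assms] jk kU] .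
  moreover have "v (fst (?S!k)) \<le> v (fst (?S!j))" using slots_sorted[OF jk kS] .
  ultimately have "c (?U!j) < v (fst (?S!j))" using q' by linarith
  then show "(\<lambda>(p, b). c p < v (fst b)) (zip ?U ?S ! j)" using jk kU kS by simp
qed

theorem lemma9:
  fixes P :: "'p set" and c :: "'p \<Rightarrow> real"
    and M :: "'m set" and PM :: "'m \<Rightarrow> 'p set"
    and A :: "'a set" and u :: "'a \<Rightarrow> nat" and v :: "'a \<Rightarrow> real"
    and \<gamma> :: nat
  assumes "finite P" and "finite M" and "finite A"
    and "\<forall>p\<in>P. c p \<ge> 0"
    and "\<Union> (PM ` M) = P" and "\<forall>m\<in>M. \<forall>m'\<in>M. m \<noteq> m' \<longrightarrow> PM m \<inter> PM m' = {}"
    and "\<forall>a\<in>A. u a > 0" and "\<forall>a\<in>A. v a \<ge> 0"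
    and "\<gamma> \<ge> 1" and "\<forall>a\<in>A. u a \<le> \<gamma>" and "\<forall>m\<in>M. card (PM m) \<le> \<gamma>"
    and "inj_on c P" and "\<forall>p\<in>P. \<forall>a\<in>A. c p \<noteq> v a"
    and "5 * \<gamma> < length (canonical c v P (slots A u))"
  shows "\<forall>m\<in>M. threshold c v P (slots A u) \<gamma> (PM m)
            \<ge> ereal (c (user_at c P (length (canonical c v P (slots A u)) - 5 * \<gamma>)))"
proof
  fix m assume mM: "m \<in> M"
  define B where "B = slots A u"
  define Pm where "Pm = PM m"
  define P' where "P' = P - Pm"
  define U where "U = users_order c P"
  define U' where "U' = users_order c P'"
  define S where "S = slots_order v B"
  define Q where "Q = (\<lambda>(p::'p, b::'a \<times> nat). c p < v (fst b))"
  define \<tau> where "\<tau> = length (canonical c v P B)"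
  define \<tau>' where "\<tau>' = length (canonical c v P' B)"
  define k where "k = card Pm"
  define n where "n = card P"
  have PmP: "Pm \<subseteq> P" unfolding Pm_def using assms(5) mM by blast
  have fPm: "finite Pm" using PmP assms(1) finite_subset by blast
  have kg: "k \<le> \<gamma>" unfolding k_def Pm_def using assms(11) mM by blast
  have fP': "finite P'" unfolding P'_def using assms(1) by simp
  have iP': "inj_on c P'" unfolding P'_def using assms(12) inj_on_subset by blast
  note UP = users_order_props[OF assms(1) assms(12), folded U_def]
  note UP' = users_order_props[OF fP' iP', folded U'_def]
  have lU: "length U = n" using UP(4) n_def by simp
  have lU': "length U' = n - k" using UP'(4) unfolding P'_def k_def n_def
    using card_Diff_subset[OF fPm PmP] by simp
  have dd: "set U - set U' = Pm" using UP(2) UP'(2) PmP unfolding P'_def by blast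
  have subU: "set U' \<subseteq> set U" using UP(2) UP'(2) unfolding P'_def by blast
  have ct: "canonical c v P B = takeWhile Q (zip U S)"
    unfolding Q_def U_def S_def by (rule canon_tw[OF assms(1) assms(12)])
  have ct': "canonical c v P' B = takeWhile Q (zip U' S)"
    unfolding Q_def U'_def S_def by (rule canon_tw[OF fP' iP'])
  have t5: "5 * \<gamma> < \<tau>" using assms(14) unfolding \<tau>_def B_def .
  have tl: "\<tau> \<le> length (zip U S)" unfolding \<tau>_def ct by (rule length_takeWhile_le)
  have tl': "\<tau>' \<le> length (zip U' S)" unfolding \<tau>'_def ct' by (rule length_takeWhile_le)
  have low: "\<tau> - k \<le> \<tau>'"
    unfolding \<tau>'_def ct'
  proof (rule tw_len)
    show "\<tau> - k \<le> length (zip U' S)" using tl lU lU' by auto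
  next
    fix j assume j: "j < \<tau> - k"
    then have jk: "j + k < \<tau>" by simp
    have jU': "j < length U'" and jkU: "j + k < length U" and jkS: "j + k < length S"
      using jk tl lU lU' by auto
    have "c (U'!j) \<le> c (U!(j+k))"
      by (rule rank_upper[OF UP(1) UP'(1) subU jU']) (use dd k_def jkU in simp_all)
    moreover have "Q (zip U S ! (j+k))" using tw_nth[of "j+k" Q "zip U S"] jk unfolding \<tau>_def ct by simp
    then have "c (U!(j+k)) < v (fst (S!(j+k)))" using jkU jkS unfolding Q_def by simp
    moreover have "v (fst (S!(j+k))) \<le> v (fst (S!j))" using slots_sorted[of j "j+k" v B] jkS unfolding S_def by simp
    ultimately have "c (U'!j) < v (fst (S!j))" by linarith
    then show "Q (zip U' S ! j)" using jU' jkS unfolding Q_def by simp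
  qed
  have t4: "4 * \<gamma> < \<tau>'" using low t5 kg by linarith
  define i0 where "i0 = \<tau> - 5 * \<gamma> - 1"
  define j0 where "j0 = \<tau>' - 4 * \<gamma> - 1"
  have ij: "i0 \<le> j0" unfolding i0_def j0_def using low kg t5 t4 by linarith
  have j0U': "j0 < length U'" unfolding j0_def using tl' t4 by auto
  have j0U: "j0 < length U" using j0U' lU lU' by simp
  have "c (U!i0) \<le> c (U!j0)" by (rule sorted_le[OF UP(1) ij j0U])
  also have "\<dots> \<le> c (U'!j0)" by (rule rank_lower[OF UP(1) UP'(1) subU j0U'])
  finally have fin: "c (U!i0) \<le> c (U'!j0)" .
  have th: "threshold c v P B \<gamma> Pm = ereal (c (U'!j0))"
    unfolding threshold_def Let_def user_at_def using t4
    by (simp add: \<tau>'_def[symmetric] P'_def[symmetric] U'_def[symmetric] j0_def)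
  have rhs: "user_at c P (length (canonical c v P B) - 5 * \<gamma>) = U!i0"
    unfolding user_at_def U_def[symmetric] \<tau>_def[symmetric] i0_def by simp
  show "threshold c v P (slots A u) \<gamma> (PM m)
            \<ge> ereal (c (user_at c P (length (canonical c v P (slots A u)) - 5 * \<gamma>)))"
    using th rhs fin unfolding B_def Pm_def by simp
qed

end
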